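(* Let $d\ge 1$, let $\Lambda$ be a $(d-2)$-dimensional simplicial complex with vertex set $[n]$, and let $\Gamma=0*\Lambda$ be the cone over $\Lambda$ with a new apex vertex $0$. Let $p':[n]\to\mathbb{R}^{d-1}$ be such that the coordinates $\{p'(s)_t:s\in[n],t\in[d-1]\}$ are algebraically independent over $\mathbb{Q}$, and set $\mathbb{F}'=\mathbb{Q}(p'(s)_t)$. Let $a_1,\dots,a_n\in\mathbb{R}$ be algebraically independent over $\mathbb{F}'$, and let $\mathbb{F}\subseteq\mathbb{R}$ be any field containing $\mathbb{F}'(a_1,\dots,a_n)$. Define $p:\{0,1,\dots,n\}\to\mathbb{F}^d$ by $p(0)=(0,\dots,0,-1)$ and $p(s)=((1+a_s)p'(s),a_s)$ for $s\in[n]$. Then for all $i\le\lfloor (d-1)/2\rfloor$ there exists an $\mathbb{F}'$-linear map $\psi_i:\mathcal{S}^a_i(\Lambda,p';\mathbb{F}')\to\mathcal{S}^a_i(\Gamma,p;\mathbb{F})$ such that for every $\omega'\in\mathcal{S}^a_i(\Lambda,p';\mathbb{F}')$, $\mathrm{supp}(\psi_i(\omega'))=\mathrm{skel}_{i-1}(0*\mathrm{supp}(\omega'))$.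
   Context: Simplicial complexes are nonempty families of subsets of a finite vertex set closed under subsets and containing all singletons; an $i$-face has $i+1$ elements. The cone $0*\Lambda=\{\sigma,\sigma\cup\{0\}:\sigma\in\Lambda\}$; $\mathrm{skel}_m(K)$ is the subcomplex of faces of dimension $\le m$. For a complex $K$ with vertex set $W$, a field $\mathbb{K}\subseteq\mathbb{R}$ and $r:W\to\mathbb{K}^e$ with $e-1=\dim K$, set $\theta_t=\sum_{v\in W}r(v)_tx_v$ for $t\in[e]$, and for a linear form $\ell=\sum_v\ell_vx_v$ let $\partial_\ell=\sum_v\ell_v\,\partial/\partial x_v$. A linear $i$-stress on $(K,r;\mathbb{K})$ is a homogeneous degree-$i$ polynomial $\lambda\in\mathbb{K}[x_v:v\in W]$ all of whose monomials with nonzero coefficient are supported on faces of $K$, with $\partial_{\theta_t}\lambda=0$ for all $t$; it is an affine $i$-stress if moreover $\partial_c\lambda=0$ where $c=\sum_{v\in W}x_v$. $\mathcal{S}^a_i(K,r;\mathbb{K})$ denotes the vector space of affine $i$-stresses. For a degree-$i$ stress $\lambda$ and an $(i-1)$-face $\sigma$, $\lambda_\sigma$ is the coefficient of $\prod_{v\in\sigma}x_v$, and $\mathrm{supp}(\lambda)$ is the subcomplex generated by the $(i-1)$-faces $\sigma$ with $\lambda_\sigma\ne0$. *)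

theory Defs
  imports Complex_Main "HOL-Library.Poly_Mapping"
begin

definition simplicial_complex :: "'v set \<Rightarrow> 'v set set \<Rightarrow> bool" where
  "simplicial_complex W K \<longleftrightarrow> finite W \<and> K \<noteq> {} \<and> (\<forall>\<sigma>\<in>K. \<sigma> \<subseteq> W)
     \<and> (\<forall>\<sigma>\<in>K. \<forall>\<tau>. \<tau> \<subseteq> \<sigma> \<longrightarrow> \<tau> \<in> K) \<and> (\<forall>v\<in>W. {v} \<in> K)"

definition dim_eq :: "'v set set \<Rightarrow> int \<Rightarrow> bool" where
  "dim_eq K m \<longleftrightarrow> (\<forall>\<sigma>\<in>K. int (card \<sigma>) \<le> m + 1) \<and> (\<exists>\<sigma>\<in>K. int (card \<sigma>) = m + 1)"

definition cone :: "'v \<Rightarrow> 'v set set \<Rightarrow> 'v set set" where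
  "cone a L = {\<sigma>. \<sigma> \<in> L} \<union> {insert a \<sigma> | \<sigma>. \<sigma> \<in> L}"

(* faces with at most k elements, i.e. skel_{k-1} *)
definition skel_card :: "nat \<Rightarrow> 'v set set \<Rightarrow> 'v set set" where
  "skel_card k K = {\<sigma> \<in> K. card \<sigma> \<le> k}"

definition is_subfield :: "real set \<Rightarrow> bool" where
  "is_subfield F \<longleftrightarrow> 0 \<in> F \<and> 1 \<in> F \<and> (\<forall>x\<in>F. \<forall>y\<in>F. x + y \<in> F \<and> x * y \<in> F)
     \<and> (\<forall>x\<in>F. - x \<in> F \<and> inverse x \<in> F)"

definition gen_field :: "real set \<Rightarrow> real set" where
  "gen_field S = \<Inter>{F. is_subfield F \<and> S \<subseteq> F}"

(* polynomials in variables indexed by 'i: coefficient functions on monomials *)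
type_synonym 'i monomial = "'i \<Rightarrow>\<^sub>0 nat"

definition mdeg :: "'i monomial \<Rightarrow> nat" where
  "mdeg m = (\<Sum>v\<in>Poly_Mapping.keys m. Poly_Mapping.lookup m v)"

definition mpoly_eval :: "('i monomial \<Rightarrow> real) \<Rightarrow> ('i \<Rightarrow> real) \<Rightarrow> real" where
  "mpoly_eval c x = (\<Sum>m\<in>{m. c m \<noteq> 0}. c m * (\<Prod>j\<in>Poly_Mapping.keys m. x j ^ Poly_Mapping.lookup m j))"

definition alg_indep :: "real set \<Rightarrow> 'i set \<Rightarrow> ('i \<Rightarrow> real) \<Rightarrow> bool" where
  "alg_indep F I x \<longleftrightarrow> (\<forall>c::'i monomial \<Rightarrow> real.
      finite {m. c m \<noteq> 0} \<and> (\<forall>m. c m \<in> F) \<and> (\<forall>m. c m \<noteq> 0 \<longrightarrow> Poly_Mapping.keys m \<subseteq> I)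
      \<and> mpoly_eval c x = 0 \<longrightarrow> (\<forall>m. c m = 0))"

(* directional derivative \<partial>_\<ell> of a polynomial in variables W *)
definition dderiv :: "'v set \<Rightarrow> ('v \<Rightarrow> real) \<Rightarrow> ('v monomial \<Rightarrow> real) \<Rightarrow> ('v monomial \<Rightarrow> real)" where
  "dderiv W l lam = (\<lambda>m. \<Sum>v\<in>W. l v * (of_nat (Poly_Mapping.lookup m v) + 1) * lam (m + Poly_Mapping.single v 1))"

(* linear i-stress on (K, r; k), r : W \<rightarrow> k^e given as r v t for t \<in> {1..e} *)
definition linear_stress ::
  "'v set \<Rightarrow> 'v set set \<Rightarrow> nat \<Rightarrow> ('v \<Rightarrow> nat \<Rightarrow> real) \<Rightarrow> real set \<Rightarrow> nat \<Rightarrow> ('v monomial \<Rightarrow> real) \<Rightarrow> bool" where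
  "linear_stress W K e r k i lam \<longleftrightarrow>
     (\<forall>m. lam m \<in> k) \<and>
     (\<forall>m. lam m \<noteq> 0 \<longrightarrow> mdeg m = i \<and> Poly_Mapping.keys m \<in> K) \<and>
     (\<forall>t\<in>{1..e}. dderiv W (\<lambda>v. r v t) lam = (\<lambda>m. 0))"

definition affine_stress ::
  "'v set \<Rightarrow> 'v set set \<Rightarrow> nat \<Rightarrow> ('v \<Rightarrow> nat \<Rightarrow> real) \<Rightarrow> real set \<Rightarrow> nat \<Rightarrow> ('v monomial \<Rightarrow> real) \<Rightarrow> bool" where
  "affine_stress W K e r k i lam \<longleftrightarrow>
     linear_stress W K e r k i lam \<and> dderiv W (\<lambda>v. 1) lam = (\<lambda>m. 0)"

definition affine_stresses ::
  "'v set \<Rightarrow> 'v set set \<Rightarrow> nat \<Rightarrow> ('v \<Rightarrow> nat \<Rightarrow> real) \<Rightarrow> real set \<Rightarrow> nat \<Rightarrow> ('v monomial \<Rightarrow> real) set" where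
  "affine_stresses W K e r k i = {lam. affine_stress W K e r k i lam}"

definition sqfree :: "'v set \<Rightarrow> 'v monomial" where
  "sqfree \<sigma> = (\<Sum>v\<in>\<sigma>. Poly_Mapping.single v 1)"

definition supp :: "nat \<Rightarrow> ('v monomial \<Rightarrow> real) \<Rightarrow> 'v set set" where
  "supp i lam = {\<tau>. \<exists>\<sigma>. finite \<sigma> \<and> card \<sigma> = i \<and> lam (sqfree \<sigma>) \<noteq> 0 \<and> \<tau> \<subseteq> \<sigma>}"

end

theory Submission imports Defs "Jordan_Normal_Form.Determinant" begin

lemma gen_field_subfield: "is_subfield (gen_field S)"
  unfolding gen_field_def is_subfield_def by blast

lemma gen_field_sub: "S \<subseteq> gen_field S"
  unfolding gen_field_def by blast

lemma gen_field_least: "is_subfield F \<Longrightarrow> S \<subseteq> F \<Longrightarrow> gen_field S \<subseteq> F"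
  unfolding gen_field_def by blast

lemma sf_0: "is_subfield F \<Longrightarrow> 0 \<in> F" unfolding is_subfield_def by blast
lemma sf_1: "is_subfield F \<Longrightarrow> 1 \<in> F" unfolding is_subfield_def by blast
lemma sf_add: "is_subfield F \<Longrightarrow> x \<in> F \<Longrightarrow> y \<in> F \<Longrightarrow> x + y \<in> F" unfolding is_subfield_def by blast
lemma sf_mult: "is_subfield F \<Longrightarrow> x \<in> F \<Longrightarrow> y \<in> F \<Longrightarrow> x * y \<in> F" unfolding is_subfield_def by blast
lemma sf_uminus: "is_subfield F \<Longrightarrow> x \<in> F \<Longrightarrow> - x \<in> F" unfolding is_subfield_def by blast
lemma sf_inverse: "is_subfield F \<Longrightarrow> x \<in> F \<Longrightarrow> inverse x \<in> F" unfolding is_subfield_def by blast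

lemma sf_sum: "is_subfield F \<Longrightarrow> (\<And>x. x \<in> A \<Longrightarrow> f x \<in> F) \<Longrightarrow> sum f A \<in> F"
proof (induction A rule: infinite_finite_induct)
  case (infinite A) then show ?case by (simp add: sf_0)
next
  case empty then show ?case by (simp add: sf_0)
next
  case (insert x A) then show ?case by (simp add: sf_add)
qed

lemma sf_prod: "is_subfield F \<Longrightarrow> (\<And>x. x \<in> A \<Longrightarrow> f x \<in> F) \<Longrightarrow> prod f A \<in> F"
proof (induction A rule: infinite_finite_induct)
  case (infinite A) then show ?case by (simp add: sf_1)
next
  case empty then show ?case by (simp add: sf_1)
next
  case (insert x A) then show ?case by (simp add: sf_mult)
qed

lemma sf_power: "is_subfield F \<Longrightarrow> x \<in> F \<Longrightarrow> x ^ k \<in> F"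
  by (induction k) (auto simp: sf_1 sf_mult)

lemma sf_of_nat: "is_subfield F \<Longrightarrow> of_nat k \<in> F"
  by (induction k) (auto simp: sf_0 sf_1 sf_add)

lemma sf_divide: "is_subfield F \<Longrightarrow> x \<in> F \<Longrightarrow> y \<in> F \<Longrightarrow> x / y \<in> F"
  by (simp add: divide_inverse sf_mult sf_inverse)

lemma lookup_sqfree: "finite A \<Longrightarrow> Poly_Mapping.lookup (sqfree A) v = (if v \<in> A then 1 else 0)"
  by (simp add: sqfree_def lookup_sum lookup_single when_def)

lemma keys_sqfree: "finite A \<Longrightarrow> Poly_Mapping.keys (sqfree A) = A"
  by (auto simp: in_keys_iff lookup_sqfree split: if_splits)

lemma sqfree_inj: "finite A \<Longrightarrow> finite B \<Longrightarrow> sqfree A = sqfree B \<Longrightarrow> A = B"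
  by (metis keys_sqfree)

lemma sqfree_insert: "finite A \<Longrightarrow> v \<notin> A \<Longrightarrow> sqfree (insert v A) = sqfree A + Poly_Mapping.single v 1"
  by (simp add: sqfree_def add.commute)

lemma mdeg_alt: "finite K \<Longrightarrow> Poly_Mapping.keys m \<subseteq> K \<Longrightarrow> mdeg m = (\<Sum>v\<in>K. Poly_Mapping.lookup m v)"
  unfolding mdeg_def
  by (rule sum.mono_neutral_left) (auto simp: in_keys_iff)

lemma keys_add_single: "Poly_Mapping.keys (m + Poly_Mapping.single v (1::nat)) = insert v (Poly_Mapping.keys m)"
  by (auto simp: in_keys_iff lookup_add lookup_single when_def split: if_splits)

lemma mdeg_add_single: "mdeg (m + Poly_Mapping.single v (1::nat)) = mdeg m + 1"
proof -
  have f: "finite (insert v (Poly_Mapping.keys m))" by simp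
  have "mdeg (m + Poly_Mapping.single v 1) = (\<Sum>u\<in>insert v (Poly_Mapping.keys m). Poly_Mapping.lookup m u + (1 when v = u))"
    by (subst mdeg_alt[OF f]) (use keys_add[of m "Poly_Mapping.single v 1"] in \<open>auto simp: lookup_add lookup_single\<close>)
  also have "\<dots> = (\<Sum>u\<in>insert v (Poly_Mapping.keys m). Poly_Mapping.lookup m u) + (\<Sum>u\<in>insert v (Poly_Mapping.keys m). (1 when v = u))"
    by (simp add: sum.distrib)
  also have "(\<Sum>u\<in>insert v (Poly_Mapping.keys m). Poly_Mapping.lookup m u) = mdeg m"
    by (subst mdeg_alt[OF f]) auto
  also have "(\<Sum>u\<in>insert v (Poly_Mapping.keys m). (1::nat) when v = u) = 1"
    by (simp add: when_def sum.delta)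
  finally show ?thesis .
qed

lemma mdeg_sqfree: "finite A \<Longrightarrow> mdeg (sqfree A) = card A"
  by (simp add: mdeg_def keys_sqfree lookup_sqfree)

lemma mpoly_eval_sqfree:
  fixes AA :: "'i set set"
  assumes fin: "finite AA" and finA: "\<forall>A\<in>AA. finite A"
  shows "mpoly_eval (\<lambda>m. if m \<in> sqfree ` AA then f (Poly_Mapping.keys m) else 0) x = (\<Sum>A\<in>AA. f A * (\<Prod>r\<in>A. x r))"
proof -
  let ?c = "\<lambda>m. if m \<in> sqfree ` AA then f (Poly_Mapping.keys m) else 0"
  let ?B = "{A\<in>AA. f A \<noteq> 0}"
  have inj: "inj_on sqfree AA" unfolding inj_on_def using finA sqfree_inj by blast
  have set: "{m. ?c m \<noteq> 0} = sqfree ` ?B"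
    using finA by (auto simp: keys_sqfree) (metis sqfree_inj)
  have "mpoly_eval ?c x = (\<Sum>m\<in>sqfree ` ?B. ?c m * (\<Prod>j\<in>Poly_Mapping.keys m. x j ^ Poly_Mapping.lookup m j))"
    unfolding mpoly_eval_def set ..
  also have "\<dots> = (\<Sum>A\<in>?B. ?c (sqfree A) * (\<Prod>j\<in>Poly_Mapping.keys (sqfree A). x j ^ Poly_Mapping.lookup (sqfree A) j))"
    by (rule sum.reindex_cong[OF inj_on_subset[OF inj]]) auto
  also have "\<dots> = (\<Sum>A\<in>?B. f A * (\<Prod>r\<in>A. x r))"
    using finA by (intro sum.cong) (auto simp: keys_sqfree lookup_sqfree)
  also have "\<dots> = (\<Sum>A\<in>AA. f A * (\<Prod>r\<in>A. x r))"
    by (rule sum.mono_neutral_left) (use fin in auto)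
  finally show ?thesis .
qed

lemma alg_indep_sqfree:
  fixes AA :: "'i set set"
  assumes ai: "alg_indep F I x" and fin: "finite AA" and AI: "\<forall>A\<in>AA. finite A \<and> A \<subseteq> I"
    and fF: "\<forall>A\<in>AA. f A \<in> F" and F0: "0 \<in> F"
    and z: "(\<Sum>A\<in>AA. f A * (\<Prod>r\<in>A. x r)) = 0"
  shows "\<forall>A\<in>AA. f A = 0"
proof -
  let ?c = "\<lambda>m. if m \<in> sqfree ` AA then f (Poly_Mapping.keys m) else 0"
  have "finite {m. ?c m \<noteq> 0}"
    by (rule finite_subset[of _ "sqfree ` AA"]) (use fin in auto)
  moreover have "\<forall>m. ?c m \<in> F" using fF F0 AI by (auto simp: keys_sqfree)
  moreover have "\<forall>m. ?c m \<noteq> 0 \<longrightarrow> Poly_Mapping.keys m \<subseteq> I" using AI by (clarsimp simp: keys_sqfree) blast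
  moreover have "mpoly_eval ?c x = 0"
    using mpoly_eval_sqfree[OF fin, of f x] AI z by auto
  ultimately have "\<forall>m. ?c m = 0" by (intro ai[unfolded alg_indep_def, THEN spec, THEN mp] conjI)
  then show ?thesis using AI by (metis image_eqI keys_sqfree)
qed

section \<open>Linear independence of the inverses\<close>

lemma prod_one_plus: "finite N \<Longrightarrow> (\<Prod>r\<in>N. 1 + (x r::real)) = (\<Sum>A\<in>Pow N. 1 * (\<Prod>r\<in>A. x r))"
  using prod_add[of N x "\<lambda>_. 1"] by (simp add: add.commute)

lemma one_plus_nonzero:
  assumes ai: "alg_indep F N a" and F: "is_subfield F" and fin: "finite N"
  shows "(\<Prod>r\<in>N. 1 + a r) \<noteq> 0"
proof
  assume "(\<Prod>r\<in>N. 1 + a r) = 0"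
  then have "(\<Sum>A\<in>Pow N. (\<lambda>_. 1::real) A * (\<Prod>r\<in>A. a r)) = 0"
    using prod_one_plus[OF fin, of a] by simp
  from alg_indep_sqfree[OF ai _ _ _ _ this] fin F have "\<forall>A\<in>Pow N. (1::real) = 0"
    by (auto simp: sf_1 sf_0 intro: finite_subset)
  then show False by auto
qed

lemma lin_indep_inv:
  assumes ai: "alg_indep F N a" and F: "is_subfield F" and fin: "finite N"
    and cF: "\<forall>v\<in>N. c v \<in> F" and z: "(\<Sum>v\<in>N. c v * inverse (1 + a v)) = 0"
  shows "\<forall>v\<in>N. c v = 0"
proof -
  let ?P = "\<Prod>r\<in>N. 1 + a r"
  have P: "?P \<noteq> 0" by (rule one_plus_nonzero[OF ai F fin])
  then have nz: "\<forall>r\<in>N. 1 + a r \<noteq> 0" using fin by auto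
  have "0 = ?P * (\<Sum>v\<in>N. c v * inverse (1 + a v))" using z by simp
  also have "\<dots> = (\<Sum>v\<in>N. c v * (\<Prod>r\<in>N-{v}. 1 + a r))"
    unfolding sum_distrib_left
  proof (rule sum.cong[OF refl])
    fix v assume v: "v \<in> N"
    have "?P = (1 + a v) * (\<Prod>r\<in>N-{v}. 1 + a r)" by (rule prod.remove[OF fin v])
    then show "?P * (c v * inverse (1 + a v)) = c v * (\<Prod>r\<in>N-{v}. 1 + a r)"
      using nz v by (simp add: field_simps)
  qed
  also have "\<dots> = (\<Sum>v\<in>N. (\<Sum>A\<in>{A. A \<in> Pow N \<and> v \<notin> A}. c v * (\<Prod>r\<in>A. a r)))"
  proof (rule sum.cong[OF refl])
    fix v assume v: "v \<in> N"
    have e: "{A. A \<in> Pow N \<and> v \<notin> A} = Pow (N - {v})" by auto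
    show "c v * (\<Prod>r\<in>N-{v}. 1 + a r) = (\<Sum>A\<in>{A. A \<in> Pow N \<and> v \<notin> A}. c v * (\<Prod>r\<in>A. a r))"
      unfolding e prod_one_plus[of "N - {v}" a, OF finite_Diff[OF fin]] sum_distrib_left by simp
  qed
  also have "\<dots> = (\<Sum>A\<in>Pow N. (\<Sum>v\<in>{v. v \<in> N \<and> v \<notin> A}. c v * (\<Prod>r\<in>A. a r)))"
    by (rule sum.swap_restrict) (use fin in auto)
  also have "\<dots> = (\<Sum>A\<in>Pow N. (\<lambda>A. \<Sum>v\<in>N-A. c v) A * (\<Prod>r\<in>A. a r))"
    by (intro sum.cong) (auto simp: sum_distrib_right set_diff_eq)
  finally have z2: "(\<Sum>A\<in>Pow N. (\<lambda>A. \<Sum>v\<in>N-A. c v) A * (\<Prod>r\<in>A. a r)) = 0" by simp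
  have all: "\<forall>A\<in>Pow N. (\<Sum>v\<in>N-A. c v) = 0"
    using alg_indep_sqfree[OF ai _ _ _ _ z2] fin F cF
    by (auto simp: sf_0 intro: finite_subset sf_sum)
  show ?thesis
  proof
    fix v assume v: "v \<in> N"
    have "N - (N - {v}) = {v}" using v by auto
    then show "c v = 0" using all[rule_format, of "N - {v}"] by auto
  qed
qed

section \<open>Affine independence of generic points\<close>

lemma perm_fix_id:
  assumes pi: "\<pi> permutes {0..<k::nat}" and fx: "\<forall>j\<in>{1..<k}. \<pi> j = j"
  shows "\<pi> = id"
proof
  fix j show "\<pi> j = id j"
  proof (cases "j \<in> {1..<k}")
    case True then show ?thesis using fx by simp
  next
    case False
    show ?thesis
    proof (cases "j < k")
      case False then show ?thesis using permutes_not_in[OF pi] by simp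
    next
      case True
      with \<open>j \<notin> {1..<k}\<close> have j0: "j = 0" by auto
      have m: "\<pi> 0 < k" using permutes_in_image[OF pi] True j0 by auto
      show ?thesis
      proof (rule ccontr)
        assume "\<pi> j \<noteq> id j"
        then have "\<pi> 0 \<in> {1..<k}" using m j0 by auto
        then have "\<pi> (\<pi> 0) = \<pi> 0" using fx by simp
        then have "\<pi> 0 = 0" using permutes_inj[OF pi] by (meson injD)
        then show False using \<open>\<pi> 0 \<in> {1..<k}\<close> by simp
      qed
    qed
  qed
qed

lemma affine_indep:
  fixes p' :: "nat \<Rightarrow> nat \<Rightarrow> real"
  assumes ai: "alg_indep \<rat> ({1..n} \<times> {1..d-1}) (\<lambda>(s, t). p' s t)"
    and tau: "\<tau> \<subseteq> {1..n}" and card: "card \<tau> \<le> d"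
    and s0: "(\<Sum>v\<in>\<tau>. c v) = 0"
    and st: "\<forall>t\<in>{1..d-1}. (\<Sum>v\<in>\<tau>. c v * p' v t) = 0"
  shows "\<forall>v\<in>\<tau>. c v = 0"
proof -
  define k where "k = card \<tau>"
  have fin: "finite \<tau>" using tau finite_subset by blast
  obtain h where h: "bij_betw h {0..<k} \<tau>" using ex_bij_betw_nat_finite[OF fin] k_def by blast
  have hinj: "inj_on h {0..<k}" and him: "h ` {0..<k} = \<tau>" using h by (auto simp: bij_betw_def)
  define A :: "real mat" where "A = mat k k (\<lambda>(j, l). if j = 0 then 1 else p' (h l) j)"
  define cv where "cv = vec k (\<lambda>l. c (h l))"
  have A: "A \<in> carrier_mat k k" unfolding A_def by simp
  have cvc: "cv \<in> carrier_vec k" unfolding cv_def by simp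
  let ?q = "\<lambda>(s, t). p' s t"
  define P where "P = {\<pi>. \<pi> permutes {0..<k}}"
  define E where "E = (\<lambda>\<pi>. (\<lambda>j. (h (\<pi> j), j)) ` {1..<k})"
  have finP: "finite P" unfolding P_def by (rule finite_permutations) simp
  have prodE: "(\<Prod>j = 0..<k. A $$ (j, \<pi> j)) = (\<Prod>x\<in>E \<pi>. ?q x)" if pi: "\<pi> \<in> P" for \<pi>
  proof -
    have lt: "\<pi> j < k" if "j < k" for j using permutes_in_image[of \<pi> "{0..<k}" j] pi that P_def by auto
    have "(\<Prod>j = 0..<k. A $$ (j, \<pi> j)) = (\<Prod>j = 1..<k. A $$ (j, \<pi> j))"
      by (rule prod.mono_neutral_right) (auto simp: A_def lt)
    also have "\<dots> = (\<Prod>j = 1..<k. p' (h (\<pi> j)) j)"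
      by (rule prod.cong) (auto simp: A_def lt)
    also have "\<dots> = (\<Prod>x\<in>E \<pi>. ?q x)"
      unfolding E_def by (subst prod.reindex) (auto simp: inj_on_def)
    finally show ?thesis .
  qed
  define f where "f = (\<lambda>B. \<Sum>\<pi>\<in>{\<pi>. \<pi> \<in> P \<and> E \<pi> = B}. (signof \<pi> :: real))"
  have detA: "det A = (\<Sum>B\<in>E ` P. f B * (\<Prod>x\<in>B. ?q x))"
  proof -
    have "det A = (\<Sum>\<pi>\<in>P. signof \<pi> * (\<Prod>j = 0..<k. A $$ (j, \<pi> j)))"
      unfolding det_def P_def A_def by simp
    also have "\<dots> = (\<Sum>\<pi>\<in>P. signof \<pi> * (\<Prod>x\<in>E \<pi>. ?q x))"
      by (rule sum.cong) (auto simp: prodE)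
    also have "\<dots> = (\<Sum>B\<in>E ` P. \<Sum>\<pi>\<in>{\<pi>. \<pi> \<in> P \<and> E \<pi> = B}. signof \<pi> * (\<Prod>x\<in>E \<pi>. ?q x))"
      by (rule sum.image_gen[OF finP])
    also have "\<dots> = (\<Sum>B\<in>E ` P. f B * (\<Prod>x\<in>B. ?q x))"
      unfolding f_def sum_distrib_right by (intro sum.cong refl) auto
    finally show ?thesis .
  qed
  have idP: "id \<in> P" unfolding P_def by (simp add: permutes_id)
  have fid: "f (E id) = 1"
  proof -
    have eqid: "\<pi> = id" if "\<pi> \<in> P" "E \<pi> = E id" for \<pi>
    proof -
      have pi: "\<pi> permutes {0..<k}" and e: "E \<pi> = E id" using that unfolding P_def by auto
      have "\<forall>j\<in>{1..<k}. \<pi> j = j"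
      proof
        fix j assume j: "j \<in> {1..<k}"
        then have "(h (\<pi> j), j) \<in> E \<pi>" unfolding E_def by auto
        then have "(h (\<pi> j), j) \<in> E id" using e by simp
        then have "h (\<pi> j) = h j" unfolding E_def by auto
        moreover have "\<pi> j \<in> {0..<k}" using permutes_in_image[OF pi] j by auto
        ultimately show "\<pi> j = j" using hinj j by (auto dest: inj_onD)
      qed
      then show "\<pi> = id" using perm_fix_id[OF pi] by simp
    qed
    have "{\<pi>. \<pi> \<in> P \<and> E \<pi> = E id} = {id}" using eqid idP by auto
    then show ?thesis unfolding f_def by simp
  qed
  have detnz: "det A \<noteq> 0"
  proof
    assume "det A = 0"
    then have z: "(\<Sum>B\<in>E ` P. f B * (\<Prod>x\<in>B. ?q x)) = 0" using detA by simp
    have sub: "\<forall>B\<in>E ` P. finite B \<and> B \<subseteq> {1..n} \<times> {1..d-1}"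
    proof
      fix B assume "B \<in> E ` P"
      then obtain \<pi> where pi: "\<pi> \<in> P" and B: "B = E \<pi>" by auto
      have "h (\<pi> j) \<in> {1..n}" if "j \<in> {1..<k}" for j
      proof -
        have "\<pi> j \<in> {0..<k}" using permutes_in_image[of \<pi> "{0..<k}" j] pi that P_def by auto
        then have "h (\<pi> j) \<in> \<tau>" using him by blast
        then show ?thesis using tau by blast
      qed
      moreover have "{1..<k} \<subseteq> {1..d-1}" using card k_def by auto
      ultimately show "finite B \<and> B \<subseteq> {1..n} \<times> {1..d-1}" unfolding B E_def by auto
    qed
    have fQ: "\<forall>B\<in>E ` P. f B \<in> \<rat>" unfolding f_def by (auto intro!: Rats_sum)
    have "\<forall>B\<in>E ` P. f B = 0"
      by (rule alg_indep_sqfree[OF ai _ sub fQ _ z]) (use finP in auto)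
    then show False using fid idP by force
  qed
  have Acv: "A *\<^sub>v cv = 0\<^sub>v k"
  proof (rule eq_vecI)
    fix j assume "j < dim_vec (0\<^sub>v k :: real vec)"
    then have j: "j < k" by simp
    have "(A *\<^sub>v cv) $ j = (\<Sum>l = 0..<k. A $$ (j, l) * c (h l))"
      using j A by (simp add: scalar_prod_def cv_def A_def)
    also have "\<dots> = (\<Sum>l = 0..<k. (if j = 0 then 1 else p' (h l) j) * c (h l))"
      using j by (intro sum.cong) (auto simp: A_def)
    also have "\<dots> = (\<Sum>v\<in>\<tau>. (if j = 0 then 1 else p' v j) * c v)"
      using sum.reindex_bij_betw[OF h, of "\<lambda>v. (if j = 0 then 1 else p' v j) * c v"] by simp
    also have "\<dots> = 0"
    proof (cases "j = 0")
      case True then show ?thesis using s0 by simp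
    next
      case False
      then have "j \<in> {1..d-1}" using j card k_def by auto
      then show ?thesis using st False by (simp add: mult.commute)
    qed
    finally show "(A *\<^sub>v cv) $ j = 0\<^sub>v k $ j" using j by simp
  qed (use A in simp)
  have "cv = 0\<^sub>v k"
    using det_0_iff_vec_prod_zero_field[OF A] detnz Acv cvc by blast
  then have "\<forall>l<k. c (h l) = 0" unfolding cv_def by (metis index_vec index_zero_vec(1))
  then show ?thesis using him by auto
qed

section \<open>Directional derivatives\<close>

lemma dderiv_add: "dderiv W l (\<lambda>m. f m + g m) = (\<lambda>m. dderiv W l f m + dderiv W l g m)"
  unfolding dderiv_def by (simp add: distrib_left sum.distrib)

lemma dderiv_scale: "dderiv W l (\<lambda>m. c * f m) = (\<lambda>m. c * dderiv W l f m)"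
  unfolding dderiv_def by (simp add: sum_distrib_left mult_ac)

lemma dderiv_zero: "dderiv W l (\<lambda>m. 0) = (\<lambda>m. 0)"
  unfolding dderiv_def by simp

lemma dderiv_cong: "(\<And>v. v \<in> W \<Longrightarrow> l v = l' v) \<Longrightarrow> dderiv W l = dderiv W l'"
  unfolding dderiv_def by (intro ext sum.cong) auto

lemma dderiv_pow_add: "(dderiv W l ^^ k) (\<lambda>m. f m + g m) = (\<lambda>m. (dderiv W l ^^ k) f m + (dderiv W l ^^ k) g m)"
  by (induction k) (simp_all add: dderiv_add)

lemma dderiv_pow_scale: "(dderiv W l ^^ k) (\<lambda>m. c * f m) = (\<lambda>m. c * (dderiv W l ^^ k) f m)"
  by (induction k) (simp_all add: dderiv_scale)

lemma dderiv_pow_zero: "(dderiv W l ^^ k) (\<lambda>m. 0) = (\<lambda>m. 0)"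
  by (induction k) (simp_all add: dderiv_zero)

lemma dderiv_apply: "dderiv W l f m = (\<Sum>v\<in>W. l v * (of_nat (Poly_Mapping.lookup m v) + 1) * f (m + Poly_Mapping.single v 1))"
  by (simp add: dderiv_def)

lemma dderiv_comm:
  fixes W :: "'v set"
  shows "dderiv W l1 (dderiv W l2 f) = dderiv W l2 (dderiv W l1 f)"
proof (rule ext)
  fix m :: "'v monomial"
  let ?e = "\<lambda>v. Poly_Mapping.single v (1::nat)"
  have "dderiv W l1 (dderiv W l2 f) m = (\<Sum>v\<in>W. \<Sum>u\<in>W. l1 v * (of_nat (Poly_Mapping.lookup m v) + 1) *
      (l2 u * (of_nat (Poly_Mapping.lookup (m + ?e v) u) + 1) * f (m + ?e v + ?e u)))"
    unfolding dderiv_def by (simp add: sum_distrib_left)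
  also have "\<dots> = (\<Sum>u\<in>W. \<Sum>v\<in>W. l1 v * (of_nat (Poly_Mapping.lookup m v) + 1) *
      (l2 u * (of_nat (Poly_Mapping.lookup (m + ?e v) u) + 1) * f (m + ?e v + ?e u)))"
    by (rule sum.swap)
  also have "\<dots> = (\<Sum>u\<in>W. \<Sum>v\<in>W. l2 u * (of_nat (Poly_Mapping.lookup m u) + 1) *
      (l1 v * (of_nat (Poly_Mapping.lookup (m + ?e u) v) + 1) * f (m + ?e u + ?e v)))"
  proof (intro sum.cong refl)
    fix u v
    have "m + ?e v + ?e u = m + ?e u + ?e v" by (simp add: add_ac)
    then show "l1 v * (of_nat (Poly_Mapping.lookup m v) + 1) *
      (l2 u * (of_nat (Poly_Mapping.lookup (m + ?e v) u) + 1) * f (m + ?e v + ?e u)) =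
      l2 u * (of_nat (Poly_Mapping.lookup m u) + 1) *
      (l1 v * (of_nat (Poly_Mapping.lookup (m + ?e u) v) + 1) * f (m + ?e u + ?e v))"
      by (cases "u = v") (simp_all add: lookup_add lookup_single when_def mult_ac)
  qed
  also have "\<dots> = dderiv W l2 (dderiv W l1 f) m"
    unfolding dderiv_def by (simp add: sum_distrib_left)
  finally show "dderiv W l1 (dderiv W l2 f) m = dderiv W l2 (dderiv W l1 f) m" .
qed

lemma dderiv_pow_comm: "dderiv W l2 ((dderiv W l1 ^^ k) f) = (dderiv W l1 ^^ k) (dderiv W l2 f)"
  by (induction k) (simp_all add: dderiv_comm)

lemma dderiv_pow_kill:
  assumes "dderiv W l2 f = (\<lambda>m. 0)"
  shows "dderiv W l2 ((dderiv W l1 ^^ k) f) = (\<lambda>m. 0)"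
  by (simp add: dderiv_pow_comm assms dderiv_pow_zero)

lemma dderiv_pow_in:
  assumes F: "is_subfield F" and l: "\<forall>v\<in>W. l v \<in> F" and f: "\<forall>m. f m \<in> F"
  shows "(dderiv W l ^^ k) f m \<in> F"
proof (induction k arbitrary: m)
  case 0 then show ?case using f by simp
next
  case (Suc k)
  define g where "g = (dderiv W l ^^ k) f"
  have g: "\<forall>m. g m \<in> F" using Suc unfolding g_def by blast
  have "dderiv W l g m \<in> F"
    unfolding dderiv_apply
    by (intro sf_sum[OF F] sf_mult[OF F] sf_add[OF F] sf_of_nat[OF F] sf_1[OF F]) (use l g in auto)
  then show ?case unfolding g_def by simp
qed

lemma dderiv_pow_supp:
  assumes f: "\<forall>m. f m \<noteq> 0 \<longrightarrow> mdeg m = j \<and> Poly_Mapping.keys m \<in> K"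
    and down: "\<forall>\<sigma>\<in>K. \<forall>\<tau>. \<tau> \<subseteq> \<sigma> \<longrightarrow> \<tau> \<in> K"
  shows "(dderiv W l ^^ k) f m \<noteq> 0 \<longrightarrow> mdeg m + k = j \<and> Poly_Mapping.keys m \<in> K"
proof (induction k arbitrary: m)
  case 0 then show ?case using f by simp
next
  case (Suc k)
  show ?case
  proof
    assume "(dderiv W l ^^ Suc k) f m \<noteq> 0"
    then have "dderiv W l ((dderiv W l ^^ k) f) m \<noteq> 0" by simp
    then obtain v where "(dderiv W l ^^ k) f (m + Poly_Mapping.single v 1) \<noteq> 0"
      unfolding dderiv_def by (metis (no_types, lifting) mult_zero_right sum.neutral)
    then have "mdeg (m + Poly_Mapping.single v 1) + k = j \<and> Poly_Mapping.keys (m + Poly_Mapping.single v 1) \<in> K"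
      using Suc by blast
    then have "mdeg m + 1 + k = j" "insert v (Poly_Mapping.keys m) \<in> K"
      unfolding mdeg_add_single keys_add_single by auto
    moreover have "Poly_Mapping.keys m \<in> K" using down calculation(2) by (meson subset_insertI)
    ultimately show "mdeg m + Suc k = j \<and> Poly_Mapping.keys m \<in> K" by simp
  qed
qed

section \<open>The construction\<close>

definition clear0 :: "nat monomial \<Rightarrow> nat monomial" where
  "clear0 m = m - Poly_Mapping.single 0 (Poly_Mapping.lookup m 0)"

definition bb :: "(nat \<Rightarrow> real) \<Rightarrow> nat \<Rightarrow> real" where
  "bb a v = inverse (1 + a v)"

definition beta :: "nat \<Rightarrow> (nat \<Rightarrow> real) \<Rightarrow> nat monomial \<Rightarrow> real" where
  "beta n a m = (\<Prod>s\<in>{1..n}. bb a s ^ Poly_Mapping.lookup m s)"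

definition Dop :: "nat \<Rightarrow> (nat \<Rightarrow> real) \<Rightarrow> (nat monomial \<Rightarrow> real) \<Rightarrow> (nat monomial \<Rightarrow> real)" where
  "Dop n a = dderiv {1..n} (bb a)"

definition psi :: "nat \<Rightarrow> (nat \<Rightarrow> real) \<Rightarrow> (nat monomial \<Rightarrow> real) \<Rightarrow> nat monomial \<Rightarrow> real" where
  "psi n a \<omega> m = ((-1) ^ Poly_Mapping.lookup m 0 / fact (Poly_Mapping.lookup m 0)) *
      (Dop n a ^^ Poly_Mapping.lookup m 0) \<omega> (clear0 m) * beta n a m"

lemma lookup_clear0: "Poly_Mapping.lookup (clear0 m) v = (if v = 0 then 0 else Poly_Mapping.lookup m v)"
  by (simp add: clear0_def lookup_minus lookup_single when_def)

lemma clear0_add0: "clear0 (m + Poly_Mapping.single 0 1) = clear0 m"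
  by (rule poly_mapping_eqI) (simp add: lookup_clear0 lookup_add lookup_single when_def)

lemma clear0_adds: "s \<noteq> 0 \<Longrightarrow> clear0 (m + Poly_Mapping.single s 1) = clear0 m + Poly_Mapping.single s 1"
  by (rule poly_mapping_eqI) (simp add: lookup_clear0 lookup_add lookup_single when_def)

lemma lookup0_add0: "Poly_Mapping.lookup (m + Poly_Mapping.single 0 1) 0 = Poly_Mapping.lookup m 0 + 1"
  by (simp add: lookup_add)

lemma lookup0_adds: "s \<noteq> 0 \<Longrightarrow> Poly_Mapping.lookup (m + Poly_Mapping.single s 1) 0 = Poly_Mapping.lookup m 0"
  by (simp add: lookup_add lookup_single when_def)

lemma beta_add0: "beta n a (m + Poly_Mapping.single 0 1) = beta n a m"
  unfolding beta_def by (intro prod.cong) (auto simp: lookup_add lookup_single when_def)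

lemma beta_adds:
  assumes s: "s \<in> {1..n}"
  shows "beta n a (m + Poly_Mapping.single s 1) = beta n a m * bb a s"
proof -
  have "beta n a (m + Poly_Mapping.single s 1) = (\<Prod>r\<in>{1..n}. bb a r ^ Poly_Mapping.lookup m r * (if r = s then bb a r else 1))"
    unfolding beta_def by (intro prod.cong) (auto simp: lookup_add lookup_single when_def)
  also have "\<dots> = beta n a m * (\<Prod>r\<in>{1..n}. (if r = s then bb a r else 1))"
    unfolding beta_def prod.distrib ..
  also have "(\<Prod>r\<in>{1..n}. (if r = s then bb a r else 1)) = bb a s"
    using s by (simp add: prod.delta')
  finally show ?thesis .
qed

lemma psi_dderiv:
  fixes l :: "nat \<Rightarrow> real" and m :: "nat monomial"
  defines "k \<equiv> Poly_Mapping.lookup m 0"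
  shows "dderiv {0..n} l (psi n a \<omega>) m =
    ((-1) ^ k / fact k) * beta n a m *
    dderiv {1..n} (\<lambda>s. (l s - l 0) * bb a s) ((Dop n a ^^ k) \<omega>) (clear0 m)"
proof -
  define c where "c = clear0 m"
  define G where "G = (Dop n a ^^ k) \<omega>"
  define C where "C = ((-1) ^ k / fact k) * beta n a m"
  let ?e = "\<lambda>v. Poly_Mapping.single v (1::nat)"
  define X where "X = (\<lambda>s. bb a s * (of_nat (Poly_Mapping.lookup m s) + 1) * G (c + ?e s))"
  have ins: "{0..n} = insert 0 {1..n}" by auto
  have lc: "Poly_Mapping.lookup c s = Poly_Mapping.lookup m s" if "s \<in> {1..n}" for s
    using that by (simp add: c_def lookup_clear0)
  have DG: "(Dop n a ^^ Suc k) \<omega> c = (\<Sum>s\<in>{1..n}. X s)"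
    unfolding X_def G_def by (simp add: Dop_def dderiv_apply lc)
  have fk: "(fact (Suc k) :: real) = of_nat (Suc k) * fact k" by simp
  have p0: "psi n a \<omega> (m + ?e 0) = - C / of_nat (Suc k) * (\<Sum>s\<in>{1..n}. X s)"
    unfolding psi_def lookup0_add0 clear0_add0 beta_add0 C_def
    using DG[unfolded c_def] by (simp add: k_def fk field_simps)
  have ps: "psi n a \<omega> (m + ?e s) = C * G (c + ?e s) * bb a s" if s: "s \<in> {1..n}" for s
  proof -
    have "s \<noteq> 0" using s by auto
    then show ?thesis
      unfolding psi_def lookup0_adds[OF \<open>s \<noteq> 0\<close>] clear0_adds[OF \<open>s \<noteq> 0\<close>] beta_adds[OF s] C_def
      by (simp add: k_def c_def G_def)
  qed
  have "dderiv {0..n} l (psi n a \<omega>) m = l 0 * (of_nat k + 1) * psi n a \<omega> (m + ?e 0)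
      + (\<Sum>s\<in>{1..n}. l s * (of_nat (Poly_Mapping.lookup m s) + 1) * psi n a \<omega> (m + ?e s))"
    unfolding dderiv_apply ins by (simp add: k_def)
  also have "\<dots> = l 0 * (of_nat k + 1) * (- C / of_nat (Suc k) * (\<Sum>s\<in>{1..n}. X s))
      + (\<Sum>s\<in>{1..n}. l s * (of_nat (Poly_Mapping.lookup m s) + 1) * (C * G (c + ?e s) * bb a s))"
    by (simp only: p0 ps cong: sum.cong)
  also have "\<dots> = - (l 0 * C * (\<Sum>s\<in>{1..n}. X s)) + (\<Sum>s\<in>{1..n}. C * (l s * X s))"
  proof -
    have "l 0 * (of_nat k + 1) * (- C / of_nat (Suc k) * (\<Sum>s\<in>{1..n}. X s)) = - (l 0 * C * (\<Sum>s\<in>{1..n}. X s))"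
      by (simp add: field_simps)
    moreover have "(\<Sum>s\<in>{1..n}. l s * (of_nat (Poly_Mapping.lookup m s) + 1) * (C * G (c + ?e s) * bb a s))
        = (\<Sum>s\<in>{1..n}. C * (l s * X s))"
      unfolding X_def by (intro sum.cong refl) (simp add: mult_ac)
    ultimately show ?thesis by simp
  qed
  also have "\<dots> = C * (\<Sum>s\<in>{1..n}. (l s - l 0) * X s)"
    by (simp add: sum_distrib_left left_diff_distrib sum_subtractf algebra_simps)
  also have "\<dots> = C * dderiv {1..n} (\<lambda>s. (l s - l 0) * bb a s) G c"
    unfolding dderiv_apply X_def by (simp add: lc mult_ac)
  finally show ?thesis unfolding C_def G_def c_def .
qed

lemma keys_clear0: "Poly_Mapping.keys (clear0 m) = Poly_Mapping.keys m - {0}"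
  by (auto simp: in_keys_iff lookup_clear0 split: if_splits)

lemma mdeg_clear0: "mdeg m = mdeg (clear0 m) + Poly_Mapping.lookup m 0"
proof -
  define K where "K = insert 0 (Poly_Mapping.keys m)"
  have fK: "finite K" and z: "0 \<in> K" unfolding K_def by auto
  have "mdeg m = (\<Sum>v\<in>K. Poly_Mapping.lookup m v)" by (rule mdeg_alt[OF fK]) (auto simp: K_def)
  also have "\<dots> = Poly_Mapping.lookup m 0 + (\<Sum>v\<in>K-{0}. Poly_Mapping.lookup m v)" by (rule sum.remove[OF fK z])
  also have "(\<Sum>v\<in>K-{0}. Poly_Mapping.lookup m v) = (\<Sum>v\<in>K-{0}. Poly_Mapping.lookup (clear0 m) v)"
    by (intro sum.cong) (auto simp: lookup_clear0)
  also have "\<dots> = (\<Sum>v\<in>K. Poly_Mapping.lookup (clear0 m) v)"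
    using sum.remove[OF fK z, of "Poly_Mapping.lookup (clear0 m)"] by (simp add: lookup_clear0)
  also have "\<dots> = mdeg (clear0 m)" by (rule mdeg_alt[symmetric, OF fK]) (auto simp: K_def keys_clear0)
  finally show ?thesis by simp
qed

lemma keys_decomp: "Poly_Mapping.keys m = (if Poly_Mapping.lookup m 0 = 0 then Poly_Mapping.keys (clear0 m) else insert 0 (Poly_Mapping.keys (clear0 m)))"
  by (auto simp: keys_clear0 in_keys_iff)

lemma bb_nz: "1 + a s \<noteq> 0 \<Longrightarrow> bb a s \<noteq> 0"
  by (simp add: bb_def)

lemma beta_nz: "\<forall>s\<in>{1..n}. 1 + a s \<noteq> 0 \<Longrightarrow> beta n a m \<noteq> 0"
  unfolding beta_def by (auto simp: bb_nz)

lemma psi_add: "psi n a (\<lambda>m. \<omega> m + \<omega>' m) = (\<lambda>m. psi n a \<omega> m + psi n a \<omega>' m)"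
  by (rule ext) (simp add: psi_def Dop_def dderiv_pow_add algebra_simps)

lemma psi_scale: "psi n a (\<lambda>m. c * \<omega> m) = (\<lambda>m. c * psi n a \<omega> m)"
  by (rule ext) (simp add: psi_def Dop_def dderiv_pow_scale algebra_simps)

lemma psi_stress:
  fixes p' :: "nat \<Rightarrow> nat \<Rightarrow> real" and \<Lambda> :: "nat set set"
  assumes sc: "simplicial_complex {1..n} \<Lambda>"
    and F: "is_subfield F" and sub: "F' \<subseteq> F" and aF: "\<forall>s\<in>{1..n}. a s \<in> F"
    and nz: "\<forall>s\<in>{1..n}. 1 + a s \<noteq> 0"
    and p_def: "p = (\<lambda>s t. if s = 0 then (if t = d then -1 else 0)
                         else (if t = d then a s else (1 + a s) * p' s t))"
    and om: "\<omega> \<in> affine_stresses {1..n} \<Lambda> (d - 1) p' F' i"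
  shows "psi n a \<omega> \<in> affine_stresses {0..n} (cone 0 \<Lambda>) d p F i"
proof -
  have omF': "\<forall>m. \<omega> m \<in> F'" and omS: "\<forall>m. \<omega> m \<noteq> 0 \<longrightarrow> mdeg m = i \<and> Poly_Mapping.keys m \<in> \<Lambda>"
    and omL: "\<forall>t\<in>{1..d-1}. dderiv {1..n} (\<lambda>v. p' v t) \<omega> = (\<lambda>m. 0)"
    and omA: "dderiv {1..n} (\<lambda>v. 1) \<omega> = (\<lambda>m. 0)"
    using om unfolding affine_stresses_def affine_stress_def linear_stress_def by auto
  have omF: "\<forall>m. \<omega> m \<in> F" using omF' sub by blast
  have down: "\<forall>\<sigma>\<in>\<Lambda>. \<forall>\<tau>. \<tau> \<subseteq> \<sigma> \<longrightarrow> \<tau> \<in> \<Lambda>" using sc unfolding simplicial_complex_def by blast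
  have bbF: "\<forall>s\<in>{1..n}. bb a s \<in> F" unfolding bb_def using aF F by (auto intro!: sf_inverse sf_add sf_1)
  have GF: "(Dop n a ^^ k) \<omega> m \<in> F" for k m
    unfolding Dop_def by (rule dderiv_pow_in[OF F bbF omF])
  have GS: "(Dop n a ^^ k) \<omega> m \<noteq> 0 \<longrightarrow> mdeg m + k = i \<and> Poly_Mapping.keys m \<in> \<Lambda>" for k m
    unfolding Dop_def by (rule dderiv_pow_supp[OF omS down])
  have c1: "psi n a \<omega> m \<in> F" for m
  proof -
    have "((-1) ^ k / fact k :: real) \<in> F" for k
      using sf_divide[OF F sf_power[OF F sf_uminus[OF F sf_1[OF F]]] sf_of_nat[OF F, of "fact k"]]
      by (simp add: of_nat_fact)
    moreover have "beta n a m \<in> F" unfolding beta_def using bbF F by (auto intro!: sf_prod sf_power)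
    ultimately show ?thesis unfolding psi_def using GF F by (intro sf_mult) auto
  qed
  have c2: "mdeg m = i \<and> Poly_Mapping.keys m \<in> cone 0 \<Lambda>" if "psi n a \<omega> m \<noteq> 0" for m
  proof -
    have "(Dop n a ^^ Poly_Mapping.lookup m 0) \<omega> (clear0 m) \<noteq> 0" using that unfolding psi_def by auto
    then have h: "mdeg (clear0 m) + Poly_Mapping.lookup m 0 = i \<and> Poly_Mapping.keys (clear0 m) \<in> \<Lambda>"
      using GS by blast
    then have "mdeg m = i" using mdeg_clear0[of m] by simp
    moreover have "Poly_Mapping.keys m \<in> cone 0 \<Lambda>"
      using h keys_decomp[of m] unfolding cone_def by auto
    ultimately show ?thesis by simp
  qed
  have killL: "dderiv {1..n} w ((Dop n a ^^ k) \<omega>) = (\<lambda>m. 0)" if "w = (\<lambda>v. p' v t)" "t \<in> {1..d-1}" for w k t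
    unfolding Dop_def that(1) by (rule dderiv_pow_kill) (use omL that(2) in blast)
  have killA: "dderiv {1..n} (\<lambda>v. 1) ((Dop n a ^^ k) \<omega>) = (\<lambda>m. 0)" for k
    unfolding Dop_def by (rule dderiv_pow_kill[OF omA])
  have c3: "dderiv {0..n} (\<lambda>v. p v t) (psi n a \<omega>) = (\<lambda>m. 0)" if t: "t \<in> {1..d}" for t
  proof (rule ext)
    fix m
    show "dderiv {0..n} (\<lambda>v. p v t) (psi n a \<omega>) m = 0"
    proof (cases "t = d")
      case True
      have eq: "dderiv {1..n} (\<lambda>s. (p s t - p 0 t) * bb a s) = dderiv {1..n} (\<lambda>v. 1)"
        by (rule dderiv_cong) (use True nz in \<open>auto simp: p_def bb_def field_simps\<close>)
      show ?thesis unfolding psi_dderiv eq killA by simp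
    next
      case False
      then have t': "t \<in> {1..d-1}" using t by auto
      have eq: "dderiv {1..n} (\<lambda>s. (p s t - p 0 t) * bb a s) = dderiv {1..n} (\<lambda>v. p' v t)"
        by (rule dderiv_cong) (use False nz in \<open>auto simp: p_def bb_def field_simps\<close>)
      show ?thesis unfolding psi_dderiv eq killL[OF refl t'] by simp
    qed
  qed
  have c4: "dderiv {0..n} (\<lambda>v. 1) (psi n a \<omega>) = (\<lambda>m. 0)"
  proof (rule ext)
    fix m
    have z: "dderiv {1..n} (\<lambda>s. (1 - 1) * bb a s) f m' = 0" for f :: "nat monomial \<Rightarrow> real" and m'
      by (simp add: dderiv_apply)
    show "dderiv {0..n} (\<lambda>v. 1) (psi n a \<omega>) m = 0" unfolding psi_dderiv z by simp
  qed
  show ?thesis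
    unfolding affine_stresses_def affine_stress_def linear_stress_def
    using c1 c2 c3 c4 by blast
qed

lemma clear0_sqfree: "finite \<sigma> \<Longrightarrow> clear0 (sqfree \<sigma>) = sqfree (\<sigma> - {0})"
  by (rule poly_mapping_eqI) (simp add: lookup_clear0 lookup_sqfree)

lemma psi_sqfree:
  assumes "finite \<sigma>"
  shows "psi n a \<omega> (sqfree \<sigma>) = (if 0 \<in> \<sigma> then - Dop n a \<omega> (sqfree (\<sigma> - {0})) else \<omega> (sqfree \<sigma>)) * beta n a (sqfree \<sigma>)"
  using assms by (simp add: psi_def lookup_sqfree clear0_sqfree)

lemma key:
  fixes p' :: "nat \<Rightarrow> nat \<Rightarrow> real" and \<Lambda> :: "nat set set"
  assumes aiP: "alg_indep \<rat> ({1..n} \<times> {1..d-1}) (\<lambda>(s, t). p' s t)"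
    and aiA: "alg_indep F' {1..n} a" and F': "is_subfield F'"
    and om: "\<omega> \<in> affine_stresses {1..n} \<Lambda> (d - 1) p' F' i"
    and fin: "finite \<tau>" and card: "card \<tau> \<le> d"
  shows "Dop n a \<omega> (sqfree \<tau>) \<noteq> 0 \<longleftrightarrow> (\<exists>v\<in>{1..n}-\<tau>. \<omega> (sqfree (insert v \<tau>)) \<noteq> 0)"
proof -
  have omF': "\<forall>m. \<omega> m \<in> F'"
    and omL: "\<forall>t\<in>{1..d-1}. dderiv {1..n} (\<lambda>v. p' v t) \<omega> = (\<lambda>m. 0)"
    and omA: "dderiv {1..n} (\<lambda>v. 1) \<omega> = (\<lambda>m. 0)"
    using om unfolding affine_stresses_def affine_stress_def linear_stress_def by auto
  define cc where "cc = (\<lambda>v. (of_nat (Poly_Mapping.lookup (sqfree \<tau>) v) + 1) * \<omega> (sqfree \<tau> + Poly_Mapping.single v 1))"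
  have D: "Dop n a \<omega> (sqfree \<tau>) = (\<Sum>v\<in>{1..n}. cc v * inverse (1 + a v))"
    unfolding Dop_def dderiv_apply cc_def bb_def by (simp add: mult_ac)
  have ccF: "\<forall>v\<in>{1..n}. cc v \<in> F'"
    unfolding cc_def using omF' F' by (auto intro!: sf_mult sf_add sf_of_nat sf_1)
  have ccout: "cc v = \<omega> (sqfree (insert v \<tau>))" if "v \<notin> \<tau>" for v
    unfolding cc_def using that fin by (simp add: lookup_sqfree sqfree_insert)
  show ?thesis
  proof
    assume "Dop n a \<omega> (sqfree \<tau>) \<noteq> 0"
    show "\<exists>v\<in>{1..n}-\<tau>. \<omega> (sqfree (insert v \<tau>)) \<noteq> 0"
    proof (rule ccontr)
      assume "\<not> ?thesis"
      then have z: "\<forall>v\<in>{1..n}-\<tau>. cc v = 0" using ccout by auto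
      define \<tau>' where "\<tau>' = \<tau> \<inter> {1..n}"
      have t's: "\<tau>' \<subseteq> {1..n}" unfolding \<tau>'_def by auto
      have red: "(\<Sum>v\<in>{1..n}. g v * cc v) = (\<Sum>v\<in>\<tau>'. g v * cc v)" for g :: "nat \<Rightarrow> real"
        by (rule sum.mono_neutral_right) (use z t's in \<open>auto simp: \<tau>'_def\<close>)
      have s0: "(\<Sum>v\<in>\<tau>'. cc v) = 0"
      proof -
        have "(\<Sum>v\<in>{1..n}. 1 * cc v) = 0"
          using fun_cong[OF omA, of "sqfree \<tau>"] unfolding dderiv_apply cc_def by (simp add: mult_ac)
        then show ?thesis unfolding red by simp
      qed
      have st: "\<forall>t\<in>{1..d-1}. (\<Sum>v\<in>\<tau>'. cc v * p' v t) = 0"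
      proof
        fix t assume t: "t \<in> {1..d-1}"
        have "(\<Sum>v\<in>{1..n}. p' v t * cc v) = 0"
          using fun_cong[OF omL[rule_format, OF t], of "sqfree \<tau>"] unfolding dderiv_apply cc_def by (simp add: mult_ac)
        then show "(\<Sum>v\<in>\<tau>'. cc v * p' v t) = 0" unfolding red by (simp add: mult.commute)
      qed
      have "card \<tau>' \<le> d" using card_mono[OF fin, of \<tau>'] card unfolding \<tau>'_def by auto
      from affine_indep[OF aiP t's this s0 st] have "\<forall>v\<in>\<tau>'. cc v = 0" .
      then have "\<forall>v\<in>{1..n}. cc v = 0" using z unfolding \<tau>'_def by auto
      then have "Dop n a \<omega> (sqfree \<tau>) = 0" unfolding D by simp
      with \<open>Dop n a \<omega> (sqfree \<tau>) \<noteq> 0\<close> show False by simp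
    qed
  next
    assume "\<exists>v\<in>{1..n}-\<tau>. \<omega> (sqfree (insert v \<tau>)) \<noteq> 0"
    then obtain v where v: "v \<in> {1..n}" "v \<notin> \<tau>" and nz: "cc v \<noteq> 0" using ccout by auto
    show "Dop n a \<omega> (sqfree \<tau>) \<noteq> 0"
    proof
      assume "Dop n a \<omega> (sqfree \<tau>) = 0"
      then have "\<forall>v\<in>{1..n}. cc v = 0" using lin_indep_inv[OF aiA F' _ ccF] D by simp
      then show False using v nz by simp
    qed
  qed
qed

lemma psi_supp:
  fixes p' :: "nat \<Rightarrow> nat \<Rightarrow> real" and \<Lambda> :: "nat set set"
  assumes sc: "simplicial_complex {1..n} \<Lambda>"
    and aiP: "alg_indep \<rat> ({1..n} \<times> {1..d-1}) (\<lambda>(s, t). p' s t)"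
    and aiA: "alg_indep F' {1..n} a" and F': "is_subfield F'"
    and nz: "\<forall>s\<in>{1..n}. 1 + a s \<noteq> 0"
    and om: "\<omega> \<in> affine_stresses {1..n} \<Lambda> (d - 1) p' F' i"
    and i: "i \<le> d"
  shows "supp i (psi n a \<omega>) = skel_card i (cone 0 (supp i \<omega>))"
proof -
  have omS: "\<forall>m. \<omega> m \<noteq> 0 \<longrightarrow> mdeg m = i \<and> Poly_Mapping.keys m \<in> \<Lambda>"
    using om unfolding affine_stresses_def affine_stress_def linear_stress_def by auto
  have LW: "\<forall>\<sigma>\<in>\<Lambda>. \<sigma> \<subseteq> {1..n}" using sc unfolding simplicial_complex_def by (elim conjE) assumption
  have inW: "\<sigma> \<subseteq> {1..n}" if "finite \<sigma>" "\<omega> (sqfree \<sigma>) \<noteq> 0" for \<sigma>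
    using omS that LW keys_sqfree[OF that(1)] by metis
  have nzpsi: "psi n a \<omega> (sqfree \<sigma>) \<noteq> 0 \<longleftrightarrow> (if 0 \<in> \<sigma> then Dop n a \<omega> (sqfree (\<sigma> - {0})) \<noteq> 0 else \<omega> (sqfree \<sigma>) \<noteq> 0)"
    if "finite \<sigma>" for \<sigma>
    using psi_sqfree[OF that, of n a \<omega>] beta_nz[OF nz, of "sqfree \<sigma>"] by auto
  let ?S = "supp i \<omega>"
  show ?thesis
  proof (rule Set.set_eqI)
    fix \<tau>
    show "\<tau> \<in> supp i (psi n a \<omega>) \<longleftrightarrow> \<tau> \<in> skel_card i (cone 0 ?S)"
    proof
      assume "\<tau> \<in> supp i (psi n a \<omega>)"
      then obtain \<sigma> where fs: "finite \<sigma>" and cs: "card \<sigma> = i" and ps: "psi n a \<omega> (sqfree \<sigma>) \<noteq> 0"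
        and ts: "\<tau> \<subseteq> \<sigma>" unfolding supp_def by blast
      have ct: "card \<tau> \<le> i" using card_mono[OF fs ts] cs by simp
      have "\<tau> \<in> cone 0 ?S"
      proof (cases "0 \<in> \<sigma>")
        case False
        then have "\<omega> (sqfree \<sigma>) \<noteq> 0" using nzpsi[OF fs] ps by simp
        then have "\<tau> \<in> ?S" unfolding supp_def using fs cs ts by blast
        then show ?thesis unfolding cone_def by blast
      next
        case True
        define \<rho> where "\<rho> = \<sigma> - {0}"
        have fr: "finite \<rho>" using fs unfolding \<rho>_def by simp
        have cr: "card \<rho> + 1 = i" using cs True fs unfolding \<rho>_def
          by (metis One_nat_def Suc_pred card_Diff_singleton card_gt_0_iff empty_iff Suc_eq_plus1)
        have "Dop n a \<omega> (sqfree \<rho>) \<noteq> 0" using nzpsi[OF fs] ps True unfolding \<rho>_def by simp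
        then obtain v where v: "v \<in> {1..n}" "v \<notin> \<rho>" and nzv: "\<omega> (sqfree (insert v \<rho>)) \<noteq> 0"
          using key[OF aiP aiA F' om fr] cr i by auto
        have "card (insert v \<rho>) = i" using fr v cr by simp
        moreover have "\<tau> - {0} \<subseteq> insert v \<rho>" using ts unfolding \<rho>_def by auto
        ultimately have "\<tau> - {0} \<in> ?S" unfolding supp_def using fr nzv by blast
        show ?thesis
        proof (cases "0 \<in> \<tau>")
          case True
          then have "\<tau> = insert 0 (\<tau> - {0})" by auto
          then show ?thesis unfolding cone_def using \<open>\<tau> - {0} \<in> ?S\<close> by blast
        next
          case False
          then have "\<tau> = \<tau> - {0}" by auto
          then show ?thesis unfolding cone_def using \<open>\<tau> - {0} \<in> ?S\<close> by auto
        qed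
      qed
      then show "\<tau> \<in> skel_card i (cone 0 ?S)" unfolding skel_card_def using ct by blast
    next
      assume "\<tau> \<in> skel_card i (cone 0 ?S)"
      then have ct: "card \<tau> \<le> i" and tc: "\<tau> \<in> ?S \<or> (\<exists>\<rho>. \<tau> = insert 0 \<rho> \<and> \<rho> \<in> ?S)"
        unfolding skel_card_def cone_def by auto
      from tc show "\<tau> \<in> supp i (psi n a \<omega>)"
      proof
        assume "\<tau> \<in> ?S"
        then obtain \<sigma> where fs: "finite \<sigma>" and cs: "card \<sigma> = i" and os: "\<omega> (sqfree \<sigma>) \<noteq> 0"
          and ts: "\<tau> \<subseteq> \<sigma>" unfolding supp_def by blast
        have "0 \<notin> \<sigma>" using inW[OF fs os] by auto
        then have "psi n a \<omega> (sqfree \<sigma>) \<noteq> 0" using nzpsi[OF fs] os by simp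
        then show ?thesis unfolding supp_def using fs cs ts by blast
      next
        assume "\<exists>\<rho>. \<tau> = insert 0 \<rho> \<and> \<rho> \<in> ?S"
        then obtain \<rho> where tr: "\<tau> = insert 0 \<rho>" and "\<rho> \<in> ?S" by blast
        then obtain \<sigma> where fs: "finite \<sigma>" and cs: "card \<sigma> = i" and os: "\<omega> (sqfree \<sigma>) \<noteq> 0"
          and rs: "\<rho> \<subseteq> \<sigma>" unfolding supp_def by blast
        have sW: "\<sigma> \<subseteq> {1..n}" using inW[OF fs os] .
        have z\<sigma>: "0 \<notin> \<sigma>" using sW by auto
        have fr: "finite \<rho>" using rs fs finite_subset by blast
        have z\<rho>: "0 \<notin> \<rho>" using rs z\<sigma> by auto
        have crr: "card \<rho> + 1 \<le> i" using ct tr fr z\<rho> by simp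
        have "i - 1 - card \<rho> \<le> card (\<sigma> - \<rho>)" using card_Diff_subset[OF fr rs] cs crr by simp
        then obtain T where T: "T \<subseteq> \<sigma> - \<rho>" "card T = i - 1 - card \<rho>" "finite T"
          using obtain_subset_with_card_n by blast
        define \<rho>' where "\<rho>' = \<rho> \<union> T"
        have fr': "finite \<rho>'" unfolding \<rho>'_def using fr T by simp
        have cr': "card \<rho>' = i - 1" unfolding \<rho>'_def using card_Un_disjoint[OF fr T(3)] T crr by auto
        have r's: "\<rho>' \<subseteq> \<sigma>" unfolding \<rho>'_def using rs T by auto
        have "\<rho>' \<noteq> \<sigma>" using cr' cs crr by auto
        then obtain v where v: "v \<in> \<sigma>" "v \<notin> \<rho>'" using r's by blast
        have "card (insert v \<rho>') = card \<sigma>" using fr' v cr' cs crr by simp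
        then have sig: "insert v \<rho>' = \<sigma>" using card_subset_eq[OF fs] r's v by simp
        have "v \<in> {1..n} - \<rho>'" using v sW by auto
        then have Dnz: "Dop n a \<omega> (sqfree \<rho>') \<noteq> 0"
          using key[OF aiP aiA F' om fr'] cr' i os sig by auto
        have z\<rho>': "0 \<notin> \<rho>'" using r's z\<sigma> by auto
        have f0: "finite (insert 0 \<rho>')" using fr' by simp
        have "psi n a \<omega> (sqfree (insert 0 \<rho>')) \<noteq> 0"
          using nzpsi[OF f0] Dnz z\<rho>' by simp
        moreover have "card (insert 0 \<rho>') = i" using fr' z\<rho>' cr' crr by simp
        moreover have "\<tau> \<subseteq> insert 0 \<rho>'" using tr unfolding \<rho>'_def by auto
        ultimately show ?thesis unfolding supp_def using f0 by blast
      qed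
    qed
  qed
qed

theorem lemma3p2:
  fixes d n :: nat
    and \<Lambda> :: "nat set set"
    and p' :: "nat \<Rightarrow> nat \<Rightarrow> real"
    and a :: "nat \<Rightarrow> real"
    and F :: "real set"
  assumes "d \<ge> 1"
    and "simplicial_complex {1..n} \<Lambda>"
    and "dim_eq \<Lambda> (int d - 2)"
    and "alg_indep \<rat> ({1..n} \<times> {1..d-1}) (\<lambda>(s, t). p' s t)"
    and "alg_indep (gen_field {p' s t | s t. s \<in> {1..n} \<and> t \<in> {1..d-1}}) {1..n} a"
    and "is_subfield F"
    and "gen_field ({p' s t | s t. s \<in> {1..n} \<and> t \<in> {1..d-1}} \<union> a ` {1..n}) \<subseteq> F"
  shows "let F' = gen_field {p' s t | s t. s \<in> {1..n} \<and> t \<in> {1..d-1}};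
             \<Gamma> = cone 0 \<Lambda>;
             p = (\<lambda>s t. if s = 0 then (if t = d then -1 else 0)
                         else (if t = d then a s else (1 + a s) * p' s t))
         in \<forall>i \<le> (d - 1) div 2.
              \<exists>\<psi>. (\<forall>\<omega>\<in>affine_stresses {1..n} \<Lambda> (d - 1) p' F' i.
                       \<psi> \<omega> \<in> affine_stresses {0..n} \<Gamma> d p F i) \<and>
                  (\<forall>\<omega>\<in>affine_stresses {1..n} \<Lambda> (d - 1) p' F' i.
                     \<forall>\<omega>'\<in>affine_stresses {1..n} \<Lambda> (d - 1) p' F' i.
                       \<psi> (\<lambda>m. \<omega> m + \<omega>' m) = (\<lambda>m. \<psi> \<omega> m + \<psi> \<omega>' m)) \<and>
                  (\<forall>c\<in>F'. \<forall>\<omega>\<in>affine_stresses {1..n} \<Lambda> (d - 1) p' F' i.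
                       \<psi> (\<lambda>m. c * \<omega> m) = (\<lambda>m. c * \<psi> \<omega> m)) \<and>
                  (\<forall>\<omega>\<in>affine_stresses {1..n} \<Lambda> (d - 1) p' F' i.
                       supp i (\<psi> \<omega>) = skel_card i (cone 0 (supp i \<omega>)))"
proof -
  define F' where "F' = gen_field {p' s t | s t. s \<in> {1..n} \<and> t \<in> {1..d-1}}"
  have F': "is_subfield F'" unfolding F'_def by (rule gen_field_subfield)
  have F: "is_subfield F" by (rule assms(6))
  have big: "gen_field ({p' s t | s t. s \<in> {1..n} \<and> t \<in> {1..d-1}} \<union> a ` {1..n}) \<subseteq> F" by (rule assms(7))
  have sub0: "{p' s t | s t. s \<in> {1..n} \<and> t \<in> {1..d-1}} \<union> a ` {1..n} \<subseteq> F"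
    using gen_field_sub[of "{p' s t | s t. s \<in> {1..n} \<and> t \<in> {1..d-1}} \<union> a ` {1..n}"] big
    by (rule subset_trans)
  have sub: "F' \<subseteq> F"
    unfolding F'_def
    by (rule gen_field_least[OF F]) (use sub0 in \<open>simp only: Un_subset_iff\<close>)
  have aF: "\<forall>s\<in>{1..n}. a s \<in> F" using sub0 unfolding Un_subset_iff image_subset_iff by (elim conjE)
  have aiA: "alg_indep F' {1..n} a" unfolding F'_def by (rule assms(5))
  have aiP: "alg_indep \<rat> ({1..n} \<times> {1..d-1}) (\<lambda>(s, t). p' s t)" by (rule assms(4))
  have sc: "simplicial_complex {1..n} \<Lambda>" by (rule assms(2))
  have nz: "\<forall>s\<in>{1..n}. 1 + a s \<noteq> 0" using one_plus_nonzero[OF aiA F'] by simp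
  show ?thesis
    unfolding Let_def F'_def[symmetric]
  proof (intro allI impI)
    fix i assume i: "i \<le> (d - 1) div 2"
    then have id: "i \<le> d" by linarith
    let ?p = "(\<lambda>s t. if s = 0 then (if t = d then -1 else 0)
                         else (if t = d then a s else (1 + a s) * p' s t))"
    show "\<exists>\<psi>. (\<forall>\<omega>\<in>affine_stresses {1..n} \<Lambda> (d - 1) p' F' i.
                       \<psi> \<omega> \<in> affine_stresses {0..n} (cone 0 \<Lambda>) d ?p F i) \<and>
                  (\<forall>\<omega>\<in>affine_stresses {1..n} \<Lambda> (d - 1) p' F' i.
                     \<forall>\<omega>'\<in>affine_stresses {1..n} \<Lambda> (d - 1) p' F' i.
                       \<psi> (\<lambda>m. \<omega> m + \<omega>' m) = (\<lambda>m. \<psi> \<omega> m + \<psi> \<omega>' m)) \<and>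
                  (\<forall>c\<in>F'. \<forall>\<omega>\<in>affine_stresses {1..n} \<Lambda> (d - 1) p' F' i.
                       \<psi> (\<lambda>m. c * \<omega> m) = (\<lambda>m. c * \<psi> \<omega> m)) \<and>
                  (\<forall>\<omega>\<in>affine_stresses {1..n} \<Lambda> (d - 1) p' F' i.
                       supp i (\<psi> \<omega>) = skel_card i (cone 0 (supp i \<omega>)))"
    proof (intro exI[of _ "psi n a"] conjI ballI)
      fix \<omega> assume om: "\<omega> \<in> affine_stresses {1..n} \<Lambda> (d - 1) p' F' i"
      show "psi n a \<omega> \<in> affine_stresses {0..n} (cone 0 \<Lambda>) d ?p F i"
        by (rule psi_stress[OF sc F sub aF nz refl om])
      show "supp i (psi n a \<omega>) = skel_card i (cone 0 (supp i \<omega>))"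
        by (rule psi_supp[OF sc aiP aiA F' nz om id])
    next
      fix \<omega> \<omega>' show "psi n a (\<lambda>m. \<omega> m + \<omega>' m) = (\<lambda>m. psi n a \<omega> m + psi n a \<omega>' m)"
        by (rule psi_add)
    next
      fix c \<omega> show "psi n a (\<lambda>m. c * \<omega> m) = (\<lambda>m. c * psi n a \<omega> m)"
        by (rule psi_scale)
    qed
  qed
qed

end
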